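(* Let $b\ge2$ be an integer and let $w$ be a fixed block of $b$-ary digits of length $p\ge1$. Let $s$ be any string of $b$-ary digits of length $\ell\ge0$. Let $$k_w^*(s)=\max_{|z|=p-1}k_w(sz),$$ where the maximum is over all strings $z$ of length $p-1$. Then for every integer $k\ge 1+k_w^*(s)$, $$\sum_{X:\;k_w(X)=k,\ X\text{ has prefix }s} b^{-|X|}=b^{p}\,b^{-\ell}.$$ In particular, for every $k\ge1$, $$Z_w(k)(b^{-1})=\sum_{X:\,k_w(X)=k}b^{-|X|}=b^p.$$
   Context: Strings are finite sequences over $\{0,\dots,b-1\}$, including the empty string $\epsilon$. $|X|$ is the length of $X$, and $sz$ is concatenation. $k_w(X)$ is the number of possibly overlapping occurrences of $w$ in $X$: indices $i$ with $x_i\dots x_{i+p-1}=w$. A string $X$ is $k$-admissible if $k_w(X)=k$. $N_w(k,l)$ is the number of $k$-admissible strings of length $l$, and $Z_w(k)=\sum_{l\ge0}N_w(k,l)t^l$. *)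

theory Defs
  imports "HOL-Analysis.Analysis"
begin

definition strings :: "nat \<Rightarrow> nat list set" where
  "strings b = {X. set X \<subseteq> {0..<b}}"

definition occ :: "nat list \<Rightarrow> nat list \<Rightarrow> nat" where
  "occ w X = card {i. i + length w \<le> length X \<and> take (length w) (drop i X) = w}"

definition kstar :: "nat \<Rightarrow> nat list \<Rightarrow> nat list \<Rightarrow> nat" where
  "kstar b w s = Max {occ w (s @ z) | z. z \<in> strings b \<and> length z = length w - 1}"

definition Nw :: "nat \<Rightarrow> nat list \<Rightarrow> nat \<Rightarrow> nat \<Rightarrow> nat" where
  "Nw b w k l = card {X \<in> strings b. length X = l \<and> occ w X = k}"

definition Zw :: "nat \<Rightarrow> nat list \<Rightarrow> nat \<Rightarrow> real \<Rightarrow> real" where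
  "Zw b w k t = (\<Sum>l. real (Nw b w k l) * t ^ l)"

end

theory Submission
  imports Defs
begin


definition endsw :: "nat list \<Rightarrow> nat list \<Rightarrow> bool" where
  "endsw w Z \<longleftrightarrow> length w \<le> length Z \<and> drop (length Z - length w) Z = w"

lemma occ_short: "length Z < length w \<Longrightarrow> occ w Z = 0"
  unfolding occ_def by auto

lemma occ_snoc:
  assumes "length w \<ge> 1"
  shows "occ w (X @ [c]) = occ w X + (if endsw w (X @ [c]) then 1 else 0)"
proof -
  let ?p = "length w"
  let ?A = "{i. i + ?p \<le> length X \<and> take ?p (drop i X) = w}"
  let ?B = "(if endsw w (X@[c]) then {Suc (length X) - ?p} else {})"
  have eq: "{i. i + ?p \<le> length (X@[c]) \<and> take ?p (drop i (X@[c])) = w} = ?A \<union> ?B"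
  proof (intro set_eqI iffI)
    fix i assume "i \<in> {i. i + ?p \<le> length (X@[c]) \<and> take ?p (drop i (X@[c])) = w}"
    hence i1: "i + ?p \<le> Suc (length X)" and i2: "take ?p (drop i (X@[c])) = w" by auto
    show "i \<in> ?A \<union> ?B"
    proof (cases "i + ?p \<le> length X")
      case True
      hence "take ?p (drop i (X@[c])) = take ?p (drop i X)" by (simp add: take_append)
      with True i2 show ?thesis by auto
    next
      case False
      hence ieq: "i = Suc (length X) - ?p" using i1 by auto
      have "endsw w (X@[c])" using i1 i2 ieq False unfolding endsw_def by auto
      thus ?thesis using ieq by auto
    qed
  next
    fix i assume "i \<in> ?A \<union> ?B"
    then show "i \<in> {i. i + ?p \<le> length (X@[c]) \<and> take ?p (drop i (X@[c])) = w}"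
    proof
      assume "i \<in> ?A" thus ?thesis by (auto simp: take_append)
    next
      assume "i \<in> ?B" thus ?thesis unfolding endsw_def by (auto split: if_splits)
    qed
  qed
  have fA: "finite ?A" by (rule finite_subset[of _ "{..length X}"]) auto
  have dis: "?A \<inter> ?B = {}" using assms by auto
  show ?thesis unfolding occ_def eq
    by (subst card_Un_disjoint[OF fA _ dis]) auto
qed


lemma endsw_append_long: "length w \<le> length V \<Longrightarrow> endsw w (Y @ V) = endsw w V"
  unfolding endsw_def by (auto simp: drop_append)

lemma endsw_len: "endsw w Z \<Longrightarrow> length w \<le> length Z"
  unfolding endsw_def by auto

lemma endsw_split: "endsw w Z \<Longrightarrow> Z = take (length Z - length w) Z @ w"
  unfolding endsw_def by (metis append_take_drop_id)

locale occctx =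
  fixes b :: nat and w :: "nat list"
  assumes b2: "b \<ge> 2" and wS: "w \<in> strings b" and wl: "length w \<ge> 1"
begin

abbreviation "p \<equiv> length w"

lemma occ_snoc': "occ w (X @ [c]) = occ w X + (if endsw w (X @ [c]) then 1 else 0)"
  using occ_snoc[OF wl] .

lemma occ_mono: "occ w X \<le> occ w (X @ u)"
proof (induction u rule: rev_induct)
  case Nil then show ?case by simp
next
  case (snoc c u) then show ?case using occ_snoc'[of "X @ u" c] by simp
qed

lemma occ_Nil[simp]: "occ w [] = 0"
  using occ_short[of "[]" w] wl by force

lemma occ_superadd: "occ w X + occ w u \<le> occ w (X @ u)"
proof (induction u rule: rev_induct)
  case Nil then show ?case by simp
next
  case (snoc c u)
  have "endsw w (u @ [c]) \<Longrightarrow> endsw w (X @ u @ [c])"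
    using endsw_append_long[where w=w and V="u@[c]" and Y=X] endsw_len[of w "u@[c]"] by auto
  then show ?case using snoc occ_snoc'[of "X @ u" c] occ_snoc'[of u c] by auto
qed

lemma occ_P2:
  assumes "endsw w Z"
  shows "occ w (Z @ u) + occ w w = occ w Z + occ w (w @ u)"
proof (induction u rule: rev_induct)
  case Nil then show ?case by simp
next
  case (snoc c u)
  obtain Y where Z: "Z = Y @ w" using endsw_split[OF assms] by blast
  have "endsw w (Z @ u @ [c]) = endsw w (w @ u @ [c])"
    unfolding Z using endsw_append_long[where w=w and V="w @ u @ [c]" and Y=Y] by simp
  then show ?case using snoc occ_snoc'[of "Z @ u" c] occ_snoc'[of "w @ u" c] by auto
qed

lemma occ_take_mono: "a \<le> n \<Longrightarrow> occ w (X @ take a u) \<le> occ w (X @ take n u)"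
  using occ_mono[of "X @ take a u" "take (n - a) (drop a u)"]
  by (metis append.assoc le_add_diff_inverse take_add)

lemma occ_take_Suc:
  assumes "n < length u"
  shows "occ w (X @ take (Suc n) u) = occ w (X @ take n u) + (if endsw w (X @ take (Suc n) u) then 1 else 0)"
  using occ_snoc'[of "X @ take n u" "u ! n"] assms
  by (simp add: take_Suc_conv_app_nth)

lemma NOEV:
  assumes "\<forall>j. a < j \<and> j \<le> n \<longrightarrow> \<not> endsw w (X @ take j u)" "a \<le> n"
  shows "occ w (X @ take n u) = occ w (X @ take a u)"
  using assms
proof (induction n)
  case 0 then show ?case by simp
next
  case (Suc n)
  show ?case
  proof (cases "a = Suc n")
    case True then show ?thesis by simp
  next
    case False
    hence IH: "occ w (X @ take n u) = occ w (X @ take a u)" using Suc by auto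
    show ?thesis
    proof (cases "n < length u")
      case True
      then show ?thesis using occ_take_Suc[OF True, of X] IH Suc.prems False by auto
    next
      case False
      then show ?thesis using IH by simp
    qed
  qed
qed

lemma EV:
  assumes "a < j" "j \<le> n" "j \<le> length u" "endsw w (X @ take j u)"
  shows "occ w (X @ take a u) < occ w (X @ take n u)"
proof -
  obtain i where j: "j = Suc i" using assms(1) by (cases j) auto
  have "occ w (X @ take j u) = occ w (X @ take i u) + 1"
    using occ_take_Suc[of i u X] assms j by auto
  moreover have "occ w (X @ take a u) \<le> occ w (X @ take i u)" using occ_take_mono assms j by auto
  moreover have "occ w (X @ take j u) \<le> occ w (X @ take n u)" using occ_take_mono assms by auto
  ultimately show ?thesis by linarith
qed

end



definition L :: "nat \<Rightarrow> nat \<Rightarrow> nat list set" where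
  "L bb m = {u. set u \<subseteq> {0..<bb} \<and> length u = m}"

lemma finL[simp]: "finite (L bb m)"
  unfolding L_def using finite_lists_length_eq[of "{0..<bb}" m] by simp

lemma cardL: "card (L bb m) = bb ^ m"
  unfolding L_def using card_lists_length_eq[of "{0..<bb}" m] by simp

lemma finL'[simp]: "finite {u \<in> L bb m. Q u}"
  by simp

lemma L_len: "u \<in> L bb m \<Longrightarrow> length u = m" unfolding L_def by auto

lemma snoc_split:
  "card {u \<in> L bb (Suc m). Q u} = (\<Sum>c<bb. card {v \<in> L bb m. Q (v @ [c])})"
proof -
  have eq: "{u \<in> L bb (Suc m). Q u} = (\<Union>c\<in>{..<bb}. (\<lambda>v. v @ [c]) ` {v \<in> L bb m. Q (v @ [c])})"
  proof (intro set_eqI iffI)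
    fix u assume u: "u \<in> {u \<in> L bb (Suc m). Q u}"
    then obtain v c where "u = v @ [c]"
      unfolding L_def by (cases u rule: rev_cases) auto
    with u show "u \<in> (\<Union>c\<in>{..<bb}. (\<lambda>v. v @ [c]) ` {v \<in> L bb m. Q (v @ [c])})"
      unfolding L_def by auto
  next
    fix u assume "u \<in> (\<Union>c\<in>{..<bb}. (\<lambda>v. v @ [c]) ` {v \<in> L bb m. Q (v @ [c])})"
    then show "u \<in> {u \<in> L bb (Suc m). Q u}" unfolding L_def by auto
  qed
  have inj: "inj_on (\<lambda>v. v @ [c]) A" for c :: nat and A by (auto simp: inj_on_def)
  have "card (\<Union>c\<in>{..<bb}. (\<lambda>v. v @ [c]) ` {v \<in> L bb m. Q (v @ [c])})
        = (\<Sum>c<bb. card ((\<lambda>v. v @ [c]) ` {v \<in> L bb m. Q (v @ [c])}))"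
  proof (rule card_UN_disjoint)
    show "\<forall>i\<in>{..<bb}. \<forall>j\<in>{..<bb}. i \<noteq> j \<longrightarrow>
      (\<lambda>v. v @ [i]) ` {v \<in> L bb m. Q (v @ [i])} \<inter> (\<lambda>v. v @ [j]) ` {v \<in> L bb m. Q (v @ [j])} = {}"
      by blast
  qed auto
  also have "\<dots> = (\<Sum>c<bb. card {v \<in> L bb m. Q (v @ [c])})"
    by (intro sum.cong refl card_image inj)
  finally show ?thesis unfolding eq .
qed

lemma card_append_prod:
  "card ((\<lambda>(a, c). a @ c) ` ({a \<in> L bb t. P a} \<times> {c \<in> L bb n. R c}))
   = card {a \<in> L bb t. P a} * card {c \<in> L bb n. R c}"
proof -
  have "inj_on (\<lambda>(a, c). a @ c) ({a \<in> L bb t. P a} \<times> {c \<in> L bb n. R c})"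
    unfolding inj_on_def L_def by auto
  then show ?thesis by (simp add: card_image card_cartesian_product)
qed

context occctx begin

definition At :: "nat list \<Rightarrow> nat set \<Rightarrow> nat \<Rightarrow> nat \<Rightarrow> nat list set" where
  "At X K m t = (\<lambda>(a, c). a @ c) ` ({a \<in> L b t. endsw w (X @ a) \<and> occ w (X @ a) \<in> K} \<times>
                                    {c \<in> L b (m - t). occ w (w @ c) = occ w w})"

lemma At_props:
  assumes "u \<in> At X K m t" "t \<le> m"
  shows "length u = m" "endsw w (X @ take t u)" "occ w (X @ u) = occ w (X @ take t u)"
        "occ w (X @ u) \<in> K" "set u \<subseteq> {0..<b}"
proof -
  obtain a c where u: "u = a @ c" and a: "a \<in> L b t" "endsw w (X @ a)" "occ w (X @ a) \<in> K"
    and c: "c \<in> L b (m - t)" "occ w (w @ c) = occ w w"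
    using assms(1) unfolding At_def by auto
  have la: "length a = t" using a L_len by auto
  show "length u = m" using u la c L_len assms(2) by fastforce
  show "endsw w (X @ take t u)" using u la a by simp
  have "occ w (X @ a @ c) = occ w (X @ a)" using occ_P2[OF a(2), of c] c by simp
  then show "occ w (X @ u) = occ w (X @ take t u)" using u la by simp
  then show "occ w (X @ u) \<in> K" using u la a by simp
  show "set u \<subseteq> {0..<b}" using u a c unfolding L_def by auto
qed

lemma LAST:
  "card {u \<in> L b m. occ w (X @ u) \<in> K} =
     (if occ w X \<in> K then card {u \<in> L b m. occ w (X @ u) = occ w X} else 0)
     + (\<Sum>t\<in>{1..m}. card {a \<in> L b t. endsw w (X @ a) \<and> occ w (X @ a) \<in> K}
                      * card {c \<in> L b (m - t). occ w (w @ c) = occ w w})"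
proof -
  let ?A0 = "(if occ w X \<in> K then {u \<in> L b m. occ w (X @ u) = occ w X} else {})"
  have eq: "{u \<in> L b m. occ w (X @ u) \<in> K} = ?A0 \<union> (\<Union>t\<in>{1..m}. At X K m t)"
  proof (intro set_eqI iffI)
    fix u assume u: "u \<in> {u \<in> L b m. occ w (X @ u) \<in> K}"
    hence lu: "length u = m" and uK: "occ w (X @ u) \<in> K" using L_len by auto
    define T where "T = {j \<in> {1..m}. endsw w (X @ take j u)}"
    show "u \<in> ?A0 \<union> (\<Union>t\<in>{1..m}. At X K m t)"
    proof (cases "T = {}")
      case True
      hence "occ w (X @ take m u) = occ w (X @ take 0 u)"
        by (intro NOEV) (auto simp: T_def)
      then show ?thesis using u lu by auto
    next
      case False
      define t where "t = Max T"
      have fT: "finite T" unfolding T_def by auto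
      have tT: "t \<in> T" unfolding t_def using Max_in[OF fT False] .
      hence t1: "1 \<le> t" "t \<le> m" and et: "endsw w (X @ take t u)" unfolding T_def by auto
      have "\<forall>j. t < j \<and> j \<le> m \<longrightarrow> \<not> endsw w (X @ take j u)"
      proof (intro allI impI notI)
        fix j assume j: "t < j \<and> j \<le> m" "endsw w (X @ take j u)"
        hence "j \<in> T" unfolding T_def by auto
        hence "j \<le> t" unfolding t_def using Max_ge[OF fT] by auto
        with j show False by auto
      qed
      hence oe: "occ w (X @ take m u) = occ w (X @ take t u)" using NOEV t1 by blast
      hence oe': "occ w (X @ u) = occ w (X @ take t u)" using lu by simp
      have P2: "occ w (X @ take t u @ drop t u) + occ w w = occ w (X @ take t u) + occ w (w @ drop t u)"
        using occ_P2[of "X @ take t u" "drop t u"] et by simp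
      have "u \<in> At X K m t"
        unfolding At_def
      proof (rule image_eqI[of _ _ "(take t u, drop t u)"])
        show "u = (case (take t u, drop t u) of (a, c) \<Rightarrow> a @ c)" by simp
        show "(take t u, drop t u) \<in> {a \<in> L b t. endsw w (X @ a) \<and> occ w (X @ a) \<in> K} \<times>
                                    {c \<in> L b (m - t). occ w (w @ c) = occ w w}"
          using u lu t1 et oe' P2 uK unfolding L_def
          by (auto dest: in_set_takeD in_set_dropD)
      qed
      then show ?thesis using t1 by auto
    qed
  next
    fix u assume "u \<in> ?A0 \<union> (\<Union>t\<in>{1..m}. At X K m t)"
    then show "u \<in> {u \<in> L b m. occ w (X @ u) \<in> K}"
    proof
      assume "u \<in> ?A0" then show ?thesis by (auto split: if_splits)
    next
      assume "u \<in> (\<Union>t\<in>{1..m}. At X K m t)"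
      then obtain t where "t \<in> {1..m}" "u \<in> At X K m t" by auto
      then show ?thesis using At_props[of u X K m t] unfolding L_def by auto
    qed
  qed
  have finAt: "finite (At X K m t)" for t unfolding At_def by simp
  have dis1: "?A0 \<inter> (\<Union>t\<in>{1..m}. At X K m t) = {}"
  proof (rule ccontr)
    assume "?A0 \<inter> (\<Union>t\<in>{1..m}. At X K m t) \<noteq> {}"
    then obtain u t where u0: "u \<in> ?A0" and t: "t \<in> {1..m}" "u \<in> At X K m t" by blast
    have "occ w (X @ take 0 u) < occ w (X @ take m u)"
      using At_props[of u X K m t] t by (intro EV[of 0 t]) auto
    then show False using u0 At_props[of u X K m t] t by (auto split: if_splits)
  qed
  have dis2: "\<forall>i\<in>{1..m}. \<forall>j\<in>{1..m}. i \<noteq> j \<longrightarrow> At X K m i \<inter> At X K m j = {}"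
  proof (intro ballI impI)
    fix i j assume ij: "i \<in> {1..m}" "j \<in> {1..m}" "i \<noteq> j"
    have "False" if "i < j" "i \<in> {1..m}" "j \<in> {1..m}" "u \<in> At X K m i" "u \<in> At X K m j" for i j u
    proof -
      have "occ w (X @ take i u) < occ w (X @ take m u)"
        using At_props[of u X K m i] At_props[of u X K m j] that by (intro EV[of i j]) auto
      then show False using At_props[of u X K m i] At_props[of u X K m j] that by auto
    qed
    then show "At X K m i \<inter> At X K m j = {}" using ij
      by (metis disjoint_iff linorder_neqE_nat)
  qed
  have "card {u \<in> L b m. occ w (X @ u) \<in> K} = card ?A0 + card (\<Union>t\<in>{1..m}. At X K m t)"
    unfolding eq by (rule card_Un_disjoint[OF _ _ dis1]) (auto simp: finAt)
  also have "card (\<Union>t\<in>{1..m}. At X K m t) = (\<Sum>t\<in>{1..m}. card (At X K m t))"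
    by (rule card_UN_disjoint) (auto simp: finAt dis2)
  finally show ?thesis unfolding At_def card_append_prod by simp
qed

end



context occctx begin

definition r :: real where "r = 1 / real b"
definition Cw :: "nat \<Rightarrow> nat" where "Cw m = card {c \<in> L b m. occ w (w @ c) = occ w w}"
definition beta :: "nat \<Rightarrow> real" where "beta m = real (Cw m) * r ^ m"
definition e :: "nat \<Rightarrow> real" where "e t = real (card {a \<in> L b t. endsw w (w @ a)}) * r ^ t"
definition e0 :: "nat \<Rightarrow> real" where "e0 t = real (card {a \<in> L b t. endsw w a}) * r ^ t"
definition S :: "nat \<Rightarrow> real" where "S n = (\<Sum>m\<le>n. beta m)"

lemma r_pos: "r > 0" unfolding r_def using b2 by simp
lemma br: "real b ^ m * r ^ m = 1"
  unfolding r_def using b2 by (simp add: power_divide)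

lemma card_sub_le: "card {u \<in> L b m. Q u} \<le> b ^ m"
  using card_mono[OF finL, of "{u \<in> L b m. Q u}" b m] cardL by auto

lemma frac_le1: "real (card {u \<in> L b m. Q u}) * r ^ m \<le> 1"
proof -
  have "real (card {u \<in> L b m. Q u}) * r ^ m \<le> real (b ^ m) * r ^ m"
    using card_sub_le[of m Q] r_pos by (intro mult_right_mono) auto
  then show ?thesis using br by simp
qed

lemma beta_nonneg: "beta m \<ge> 0" unfolding beta_def using r_pos by simp
lemma beta_le1: "beta m \<le> 1" unfolding beta_def Cw_def by (rule frac_le1)
lemma e_nonneg: "e t \<ge> 0" unfolding e_def using r_pos by simp
lemma e_le1: "e t \<le> 1" unfolding e_def by (rule frac_le1)
lemma e0_nonneg: "e0 t \<ge> 0" unfolding e0_def using r_pos by simp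

lemma L0: "L b 0 = {[]}" unfolding L_def by auto

lemma beta0: "beta 0 = 1"
proof -
  have eq: "{c \<in> L b 0. occ w (w @ c) = occ w w} = {[]}" unfolding L0 by auto
  have "Cw 0 = 1" unfolding Cw_def eq by simp
  then show ?thesis unfolding beta_def by simp
qed

lemma card_endsw:
  assumes "p \<le> t"
  shows "card {a \<in> L b t. endsw w a} = b ^ (t - p)"
proof -
  have "{a \<in> L b t. endsw w a} = (\<lambda>v. v @ w) ` L b (t - p)"
  proof (intro set_eqI iffI)
    fix a assume a: "a \<in> {a \<in> L b t. endsw w a}"
    hence a1: "a = take (length a - p) a @ w" using endsw_split by blast
    have "set (take (length a - p) a) \<subseteq> set a" by (rule set_take_subset)
    moreover have "length a = t" using a L_len by blast
    ultimately have "take (length a - p) a \<in> L b (t - p)"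
      using a assms unfolding L_def by auto
    with a1 show "a \<in> (\<lambda>v. v @ w) ` L b (t - p)" by (rule image_eqI)
  next
    fix a assume "a \<in> (\<lambda>v. v @ w) ` L b (t - p)"
    then obtain v where v: "v \<in> L b (t - p)" "a = v @ w" by blast
    have "set w \<subseteq> {0..<b}" using wS unfolding strings_def by simp
    moreover have "length v = t - p" "set v \<subseteq> {0..<b}" using v unfolding L_def by auto
    ultimately have "a \<in> L b t" using v assms unfolding L_def by auto
    moreover have "endsw w a" unfolding v(2) endsw_def by simp
    ultimately show "a \<in> {a \<in> L b t. endsw w a}" by simp
  qed
  moreover have "inj_on (\<lambda>v. v @ w) (L b (t - p))" by (auto simp: inj_on_def)
  ultimately show ?thesis by (simp add: card_image cardL)
qed

lemma e0_val: "e0 t = (if p \<le> t then r ^ p else 0)"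
proof (cases "p \<le> t")
  case True
  have "real (b ^ (t - p)) * r ^ t = (real b ^ (t - p) * r ^ (t - p)) * r ^ p"
    using True by (simp add: power_add[symmetric])
  then show ?thesis unfolding e0_def card_endsw[OF True] using True br by simp
next
  case False
  have "{a \<in> L b t. endsw w a} = {}" using False unfolding L_def endsw_def by auto
  then show ?thesis unfolding e0_def using False by simp
qed

lemma e_val: "p \<le> t \<Longrightarrow> e t = r ^ p"
proof -
  assume t: "p \<le> t"
  have "{a \<in> L b t. endsw w (w @ a)} = {a \<in> L b t. endsw w a}"
    using t endsw_append_long[where w=w and Y=w] unfolding L_def by auto
  then show ?thesis using e0_val[of t] t unfolding e_def e0_def by simp
qed

lemma ID1: "1 = beta m + (\<Sum>t\<in>{1..m}. e t * beta (m - t))"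
proof -
  have "card {u \<in> L b m. occ w (w @ u) \<in> UNIV} = Cw m +
     (\<Sum>t\<in>{1..m}. card {a \<in> L b t. endsw w (w @ a)} * Cw (m - t))"
    using LAST[of m w UNIV] unfolding Cw_def by simp
  hence "real b ^ m = real (Cw m) + (\<Sum>t\<in>{1..m}. real (card {a \<in> L b t. endsw w (w @ a)}) * real (Cw (m - t)))"
    using cardL[of b m] by (simp flip: of_nat_mult of_nat_sum of_nat_power add: )
  hence "real b ^ m * r ^ m = real (Cw m) * r ^ m + (\<Sum>t\<in>{1..m}. real (card {a \<in> L b t. endsw w (w @ a)}) * real (Cw (m - t))) * r ^ m"
    by (simp add: distrib_right)
  also have "(\<Sum>t\<in>{1..m}. real (card {a \<in> L b t. endsw w (w @ a)}) * real (Cw (m - t))) * r ^ m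
     = (\<Sum>t\<in>{1..m}. e t * beta (m - t))"
    unfolding sum_distrib_right e_def beta_def
  proof (intro sum.cong refl)
    fix t assume "t \<in> {1..m}"
    hence "r ^ m = r ^ t * r ^ (m - t)" by (simp flip: power_add)
    then show "real (card {a \<in> L b t. endsw w (w @ a)}) * real (Cw (m - t)) * r ^ m =
        real (card {a \<in> L b t. endsw w (w @ a)}) * r ^ t * (real (Cw (m - t)) * r ^ (m - t))"
      by simp
  qed
  finally show ?thesis using br unfolding beta_def by simp
qed

lemma ID2: "real (Suc N) = S N + (\<Sum>t\<in>{1..N}. e t * S (N - t))"
proof (induction N)
  case 0 then show ?case by (simp add: S_def beta0)
next
  case (Suc N)
  have "(\<Sum>t\<in>{1..Suc N}. e t * S (Suc N - t)) = (\<Sum>t\<in>{1..N}. e t * S (Suc N - t)) + e (Suc N) * S 0"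
    by simp
  also have "(\<Sum>t\<in>{1..N}. e t * S (Suc N - t)) = (\<Sum>t\<in>{1..N}. e t * S (N - t)) + (\<Sum>t\<in>{1..N}. e t * beta (Suc N - t))"
    unfolding sum.distrib[symmetric]
  proof (intro sum.cong refl)
    fix t assume "t \<in> {1..N}"
    hence "Suc N - t = Suc (N - t)" by auto
    then show "e t * S (Suc N - t) = e t * S (N - t) + e t * beta (Suc N - t)"
      unfolding S_def by (simp add: distrib_left)
  qed
  also have "S 0 = beta (Suc N - Suc N)" by (simp add: S_def)
  finally have "(\<Sum>t\<in>{1..Suc N}. e t * S (Suc N - t)) = (\<Sum>t\<in>{1..N}. e t * S (N - t)) + (\<Sum>t\<in>{1..Suc N}. e t * beta (Suc N - t))"
    by simp
  moreover have "S (Suc N) = S N + beta (Suc N)" by (simp add: S_def)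
  moreover note ID1[of "Suc N"] Suc.IH
  moreover have "real (Suc (Suc N)) = real (Suc N) + 1" by simp
  ultimately show ?case by linarith
qed

lemma S_mono: "m \<le> n \<Longrightarrow> S m \<le> S n"
  unfolding S_def by (intro sum_mono2) (auto simp: beta_nonneg)

lemma S_nonneg: "S n \<ge> 0" unfolding S_def by (intro sum_nonneg) (auto simp: beta_nonneg)

lemma S_upper: "S M \<le> real b ^ p"
proof -
  define x where "x = r ^ p * S M"
  have key: "real (Suc q) * x \<le> real (Suc q) + real (M + p)" for q
  proof -
    define N where "N = M + p + q"
    have "(\<Sum>t\<in>{p..p+q}. e t * S (N - t)) \<le> (\<Sum>t\<in>{1..N}. e t * S (N - t))"
      using wl by (intro sum_mono2) (auto simp: N_def e_nonneg S_nonneg)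
    moreover have "(\<Sum>t\<in>{p..p+q}. x) \<le> (\<Sum>t\<in>{p..p+q}. e t * S (N - t))"
    proof (intro sum_mono)
      fix t assume t: "t \<in> {p..p+q}"
      hence "S M \<le> S (N - t)" by (intro S_mono) (auto simp: N_def)
      moreover have "e t = r ^ p" using t by (intro e_val) auto
      ultimately show "x \<le> e t * S (N - t)" unfolding x_def using r_pos by (simp add: mult_left_mono)
    qed
    moreover have "(\<Sum>t\<in>{p..p+q}. x) = real (Suc q) * x" by simp
    ultimately have "real (Suc q) * x \<le> real (Suc N) - S N" using ID2[of N] by linarith
    then show ?thesis using S_nonneg[of N] unfolding N_def by simp
  qed
  have "x \<le> 1"
  proof (rule ccontr)
    assume "\<not> x \<le> 1"
    then have x1: "x - 1 > 0" by simp
    obtain q :: nat where q: "real q > real (M + p) / (x - 1)" using reals_Archimedean2 by blast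
    hence "real q * (x - 1) > real (M + p)" using x1 by (simp add: field_simps)
    hence "real (Suc q) * (x - 1) > real (M + p)" using x1 by (simp add: algebra_simps)
    with key[of q] show False by (simp add: algebra_simps)
  qed
  hence "real b ^ p * (r ^ p * S M) \<le> real b ^ p" unfolding x_def using b2 by simp
  then show ?thesis using br[of p] by (simp add: mult.assoc[symmetric])
qed

lemma beta_summable: "summable beta"
proof (rule summableI_nonneg_bounded[where x="real b ^ p"])
  show "0 \<le> beta n" for n by (rule beta_nonneg)
  show "(\<Sum>i<n. beta i) \<le> real b ^ p" for n
  proof (cases n)
    case 0 then show ?thesis by simp
  next
    case (Suc m)
    then have "(\<Sum>i<n. beta i) = S m" unfolding S_def using lessThan_Suc_atMost by simp
    then show ?thesis using S_upper by simp
  qed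
qed

lemma sum_e_bound: "(\<Sum>t\<in>{1..N}. e t) \<le> real (min N p) + real N * r ^ p"
proof (induction N)
  case 0 then show ?case by simp
next
  case (Suc N)
  have "(\<Sum>t\<in>{1..Suc N}. e t) = (\<Sum>t\<in>{1..N}. e t) + e (Suc N)" by simp
  moreover have "e (Suc N) \<le> real (min (Suc N) p) - real (min N p) + r ^ p"
  proof (cases "p \<le> Suc N")
    case True then show ?thesis using e_val[OF True] by simp
  next
    case False
    have "r ^ p \<ge> 0" using r_pos by simp
    then show ?thesis using e_le1[of "Suc N"] False by simp
  qed
  ultimately show ?case using Suc.IH by (simp add: algebra_simps)
qed

lemma beta_sums: "beta sums (real b ^ p)"
proof -
  define Lb where "Lb = suminf beta"
  have Lle: "Lb \<le> real b ^ p"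
    unfolding Lb_def using beta_summable
  proof (rule suminf_le_const)
    fix n show "(\<Sum>i<n. beta i) \<le> real b ^ p"
    proof (cases n)
      case 0 then show ?thesis by simp
    next
      case (Suc m)
      then have "(\<Sum>i<n. beta i) = S m" unfolding S_def using lessThan_Suc_atMost by simp
      then show ?thesis using S_upper by simp
    qed
  qed
  have SL: "S n \<le> Lb" for n
    unfolding S_def Lb_def by (rule sum_le_suminf[OF beta_summable]) (auto simp: beta_nonneg)
  have Lnn: "Lb \<ge> 0" using SL[of 0] S_nonneg[of 0] by simp
  have key: "real (Suc N) \<le> Lb * (1 + real p + real N * r ^ p)" for N
  proof -
    have "(\<Sum>t\<in>{1..N}. e t * S (N - t)) \<le> (\<Sum>t\<in>{1..N}. e t * Lb)"
      by (intro sum_mono mult_left_mono SL e_nonneg)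
    also have "\<dots> = Lb * (\<Sum>t\<in>{1..N}. e t)" by (simp add: sum_distrib_left mult.commute)
    also have "\<dots> \<le> Lb * (real p + real N * r ^ p)"
      using sum_e_bound[of N] Lnn by (intro mult_left_mono) auto
    finally show ?thesis using ID2[of N] SL[of N] by (simp add: algebra_simps)
  qed
  have "Lb \<ge> real b ^ p"
  proof (rule ccontr)
    assume "\<not> Lb \<ge> real b ^ p"
    hence "Lb * r ^ p < real b ^ p * r ^ p" using r_pos by simp
    hence y: "1 - Lb * r ^ p > 0" using br[of p] by simp
    obtain N :: nat where N: "real N > (Lb * (1 + real p)) / (1 - Lb * r ^ p)" using reals_Archimedean2 by blast
    hence "real N * (1 - Lb * r ^ p) > Lb * (1 + real p)" using y by (simp add: field_simps)
    with key[of N] show False by (simp add: algebra_simps)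
  qed
  with Lle have "Lb = real b ^ p" by simp
  then show ?thesis using beta_summable unfolding Lb_def by (metis summable_sums)
qed

end



context occctx begin

lemma LASTn:
  "real (card {u \<in> L b m. occ w (X @ u) \<in> K}) * r ^ m =
     (if occ w X \<in> K then real (card {u \<in> L b m. occ w (X @ u) = occ w X}) * r ^ m else 0)
     + (\<Sum>t\<in>{1..m}. (real (card {a \<in> L b t. endsw w (X @ a) \<and> occ w (X @ a) \<in> K}) * r ^ t) * beta (m - t))"
proof -
  have "real (card {u \<in> L b m. occ w (X @ u) \<in> K}) =
     (if occ w X \<in> K then real (card {u \<in> L b m. occ w (X @ u) = occ w X}) else 0)
     + (\<Sum>t\<in>{1..m}. real (card {a \<in> L b t. endsw w (X @ a) \<and> occ w (X @ a) \<in> K}) * real (Cw (m - t)))"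
    using arg_cong[OF LAST[of m X K], of real] unfolding Cw_def by simp
  hence "real (card {u \<in> L b m. occ w (X @ u) \<in> K}) * r ^ m =
     (if occ w X \<in> K then real (card {u \<in> L b m. occ w (X @ u) = occ w X}) else 0) * r ^ m
     + (\<Sum>t\<in>{1..m}. real (card {a \<in> L b t. endsw w (X @ a) \<and> occ w (X @ a) \<in> K}) * real (Cw (m - t))) * r ^ m"
    by (simp add: distrib_right)
  also have "(\<Sum>t\<in>{1..m}. real (card {a \<in> L b t. endsw w (X @ a) \<and> occ w (X @ a) \<in> K}) * real (Cw (m - t))) * r ^ m
     = (\<Sum>t\<in>{1..m}. (real (card {a \<in> L b t. endsw w (X @ a) \<and> occ w (X @ a) \<in> K}) * r ^ t) * beta (m - t))"
    unfolding sum_distrib_right beta_def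
  proof (intro sum.cong refl)
    fix t assume "t \<in> {1..m}"
    hence "r ^ m = r ^ t * r ^ (m - t)" by (simp flip: power_add)
    then show "real (card {a \<in> L b t. endsw w (X @ a) \<and> occ w (X @ a) \<in> K}) * real (Cw (m - t)) * r ^ m =
        real (card {a \<in> L b t. endsw w (X @ a) \<and> occ w (X @ a) \<in> K}) * r ^ t * (real (Cw (m - t)) * r ^ (m - t))"
      by simp
  qed
  finally show ?thesis by simp
qed

definition alpha :: "nat \<Rightarrow> real" where
  "alpha N = real (card {u \<in> L b N. occ w u = 0}) * r ^ N"

lemma alpha_nonneg: "alpha N \<ge> 0" unfolding alpha_def using r_pos by simp

lemma ID3: "1 = alpha N + (\<Sum>t\<in>{1..N}. e0 t * beta (N - t))"
proof -
  have "real (card {u \<in> L b N. occ w ([] @ u) \<in> UNIV}) * r ^ N = alpha N + (\<Sum>t\<in>{1..N}. e0 t * beta (N - t))"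
    using LASTn[of N "[]" UNIV] unfolding alpha_def e0_def by simp
  moreover have "real (card {u \<in> L b N. occ w ([] @ u) \<in> UNIV}) * r ^ N = 1"
    using cardL[of b N] br[of N] by simp
  ultimately show ?thesis by simp
qed

lemma alpha_bound:
  assumes "p \<le> N"
  shows "alpha N \<le> 1 - r ^ p * S (N - p)"
proof -
  have "(\<Sum>t\<in>{p..N}. beta (N - t)) = (\<Sum>j\<in>{..N-p}. beta j)"
    by (rule sum.reindex_bij_witness[where i="\<lambda>j. N - j" and j="\<lambda>t. N - t"]) (use assms in auto)
  moreover have "(\<Sum>t\<in>{p..N}. e0 t * beta (N - t)) = r ^ p * (\<Sum>t\<in>{p..N}. beta (N - t))"
    unfolding sum_distrib_left by (intro sum.cong refl) (auto simp: e0_val)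
  ultimately have "r ^ p * S (N - p) = (\<Sum>t\<in>{p..N}. e0 t * beta (N - t))"
    unfolding S_def by simp
  also have "\<dots> \<le> (\<Sum>t\<in>{1..N}. e0 t * beta (N - t))"
    using wl by (intro sum_mono2) (auto simp: e0_nonneg beta_nonneg)
  finally show ?thesis using ID3[of N] by simp
qed

lemma S_lim: "S \<longlonglongrightarrow> real b ^ p"
proof -
  have "(\<lambda>n. \<Sum>i<n. beta i) \<longlonglongrightarrow> real b ^ p" using beta_sums unfolding sums_def .
  hence "(\<lambda>n. \<Sum>i<Suc n. beta i) \<longlonglongrightarrow> real b ^ p" by (rule LIMSEQ_Suc)
  then show ?thesis unfolding S_def lessThan_Suc_atMost .
qed

lemma alpha_lim: "alpha \<longlonglongrightarrow> 0"
proof -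
  define g where "g n = 1 - r ^ p * S (n - p)" for n
  have "(\<lambda>n. 1 - r ^ p * S n) \<longlonglongrightarrow> 1 - r ^ p * real b ^ p"
    by (intro tendsto_intros S_lim)
  hence "(\<lambda>n. g (n + p)) \<longlonglongrightarrow> 0" unfolding g_def using br[of p] by (simp add: mult.commute)
  hence g0: "g \<longlonglongrightarrow> 0" by (rule LIMSEQ_offset)
  show ?thesis
  proof (rule tendsto_sandwich[OF _ _ tendsto_const g0])
    show "\<forall>\<^sub>F n in sequentially. 0 \<le> alpha n" by (simp add: alpha_nonneg)
    show "\<forall>\<^sub>F n in sequentially. alpha n \<le> g n"
      unfolding g_def using alpha_bound eventually_sequentially by blast
  qed
qed


end


context occctx begin
definition hh :: "nat list \<Rightarrow> nat \<Rightarrow> nat \<Rightarrow> real" where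
  "hh s j t = real (card {a \<in> L b t. endsw w (s @ a) \<and> occ w (s @ a) = j}) * r ^ t"
definition PP :: "nat list \<Rightarrow> nat \<Rightarrow> nat \<Rightarrow> real" where
  "PP s j N = real (card {u \<in> L b N. occ w (s @ u) = j}) * r ^ N"
definition Phi :: "nat list \<Rightarrow> nat \<Rightarrow> nat \<Rightarrow> real" where
  "Phi s j N = real (card {u \<in> L b N. j \<le> occ w (s @ u)}) * r ^ N"

lemma hh_nonneg: "hh s j t \<ge> 0" unfolding hh_def using r_pos by simp
lemma PP_nonneg: "PP s j t \<ge> 0" unfolding PP_def using r_pos by simp

lemma hh0: "occ w s < j \<Longrightarrow> hh s j 0 = 0"
proof -
  assume "occ w s < j"
  hence "{a \<in> L b 0. endsw w (s @ a) \<and> occ w (s @ a) = j} = {}" unfolding L0 by auto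
  then show ?thesis unfolding hh_def by simp
qed

lemma PP_conv:
  assumes "occ w s < j"
  shows "PP s j N = (\<Sum>i\<le>N. hh s j i * beta (N - i))"
proof -
  have "PP s j N = (\<Sum>t\<in>{1..N}. hh s j t * beta (N - t))"
    using LASTn[of N s "{j}"] assms unfolding PP_def hh_def by simp
  also have "\<dots> = (\<Sum>i\<le>N. hh s j i * beta (N - i))"
    unfolding atMost_atLeast0 using sum.atLeast_Suc_atMost[of 0 N "\<lambda>i. hh s j i * beta (N - i)"]
    by (simp add: hh0[OF assms])
  finally show ?thesis .
qed

lemma FIRST_card:
  "card {u \<in> L b (Suc N). j \<le> occ w (s @ u)} =
     b * card {u \<in> L b N. j \<le> occ w (s @ u)} + card {a \<in> L b (Suc N). endsw w (s @ a) \<and> occ w (s @ a) = j}"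
proof -
  have split: "card {v \<in> L b N. j \<le> occ w (s @ v @ [c])} =
      card {v \<in> L b N. j \<le> occ w (s @ v)} + card {v \<in> L b N. endsw w (s @ v @ [c]) \<and> occ w (s @ v @ [c]) = j}" for c
  proof -
    have eq: "{v \<in> L b N. j \<le> occ w (s @ v @ [c])} =
      {v \<in> L b N. j \<le> occ w (s @ v)} \<union> {v \<in> L b N. endsw w (s @ v @ [c]) \<and> occ w (s @ v @ [c]) = j}"
      using occ_snoc'[of "s @ v" c for v] by auto
    have dis: "{v \<in> L b N. j \<le> occ w (s @ v)} \<inter> {v \<in> L b N. endsw w (s @ v @ [c]) \<and> occ w (s @ v @ [c]) = j} = {}"
      using occ_snoc'[of "s @ v" c for v] by auto
    show ?thesis unfolding eq by (rule card_Un_disjoint[OF _ _ dis]) auto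
  qed
  have "card {u \<in> L b (Suc N). j \<le> occ w (s @ u)} = (\<Sum>c<b. card {v \<in> L b N. j \<le> occ w (s @ v @ [c])})"
    using snoc_split[of b N "\<lambda>u. j \<le> occ w (s @ u)"] by simp
  also have "\<dots> = (\<Sum>c<b. card {v \<in> L b N. j \<le> occ w (s @ v)}) + (\<Sum>c<b. card {v \<in> L b N. endsw w (s @ v @ [c]) \<and> occ w (s @ v @ [c]) = j})"
    unfolding split sum.distrib ..
  also have "(\<Sum>c<b. card {v \<in> L b N. endsw w (s @ v @ [c]) \<and> occ w (s @ v @ [c]) = j}) =
      card {a \<in> L b (Suc N). endsw w (s @ a) \<and> occ w (s @ a) = j}"
    using snoc_split[of b N "\<lambda>a. endsw w (s @ a) \<and> occ w (s @ a) = j"] by simp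
  finally show ?thesis by simp
qed

lemma FIRST:
  assumes "occ w s < j"
  shows "Phi s j N = (\<Sum>t\<le>N. hh s j t)"
proof (induction N)
  case 0
  have "{u \<in> L b 0. j \<le> occ w (s @ u)} = {}" using assms unfolding L0 by auto
  then show ?case unfolding Phi_def using hh0[OF assms] by simp
next
  case (Suc N)
  have "Phi s j (Suc N) = real b * real (card {u \<in> L b N. j \<le> occ w (s @ u)}) * (r * r ^ N) + hh s j (Suc N)"
    unfolding Phi_def hh_def FIRST_card by (simp add: distrib_right)
  also have "real b * real (card {u \<in> L b N. j \<le> occ w (s @ u)}) * (r * r ^ N) = Phi s j N"
    unfolding Phi_def using br[of 1] by simp
  finally show ?case using Suc.IH by simp
qed

lemma Phi_le1: "Phi s j N \<le> 1" unfolding Phi_def by (rule frac_le1)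

lemma hh_summable:
  assumes "occ w s < j"
  shows "summable (hh s j)"
proof (rule summableI_nonneg_bounded[where x=1])
  show "0 \<le> hh s j n" for n by (rule hh_nonneg)
  show "(\<Sum>i<n. hh s j i) \<le> 1" for n
  proof (cases n)
    case 0 then show ?thesis by simp
  next
    case (Suc m)
    then show ?thesis using FIRST[OF assms, of m] Phi_le1[of s j m] lessThan_Suc_atMost by simp
  qed
qed

lemma PP_sums:
  assumes "occ w s < j"
  shows "PP s j sums (suminf (hh s j) * real b ^ p)"
proof -
  have n1: "(\<lambda>k. \<bar>hh s j k\<bar>) = hh s j" using hh_nonneg by (simp add: abs_of_nonneg)
  have n2: "(\<lambda>k. \<bar>beta k\<bar>) = beta" using beta_nonneg by (simp add: abs_of_nonneg)
  have "(\<lambda>k. \<Sum>i\<le>k. hh s j i * beta (k - i)) sums (suminf (hh s j) * suminf beta)"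
    by (rule Cauchy_product_sums) (simp_all add: n1 n2 hh_summable[OF assms] beta_summable)
  moreover have "suminf beta = real b ^ p" using beta_sums sums_unique by metis
  moreover have "PP s j = (\<lambda>k. \<Sum>i\<le>k. hh s j i * beta (k - i))"
    using PP_conv[OF assms] by (intro ext)
  ultimately show ?thesis by simp
qed

lemma PP_lim: "PP s j \<longlonglongrightarrow> 0"
proof (cases "occ w s < j")
  case True
  then show ?thesis using PP_sums[OF True] summable_LIMSEQ_zero sums_summable by blast
next
  case False
  show ?thesis
  proof (cases "j = occ w s")
    case True
    have "PP s j N \<le> alpha N" for N
    proof -
      have "card {u \<in> L b N. occ w (s @ u) = j} \<le> card {u \<in> L b N. occ w u = 0}"
      proof (intro card_mono)
        show "{u \<in> L b N. occ w (s @ u) = j} \<subseteq> {u \<in> L b N. occ w u = 0}"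
        proof
          fix u assume "u \<in> {u \<in> L b N. occ w (s @ u) = j}"
          then show "u \<in> {u \<in> L b N. occ w u = 0}" using occ_superadd[of s u] True by auto
        qed
      qed simp
      then show ?thesis unfolding PP_def alpha_def using r_pos by (simp add: mult_right_mono)
    qed
    then show ?thesis
      by (intro tendsto_sandwich[OF _ _ tendsto_const alpha_lim]) (auto simp: PP_nonneg)
  next
    case False
    with \<open>\<not> occ w s < j\<close> have "j < occ w s" by simp
    have e: "{u \<in> L b N. occ w (s @ u) = j} = {}" for N
      using occ_mono[of s] \<open>j < occ w s\<close> by (metis (mono_tags, lifting) empty_Collect_eq leD)
    show ?thesis unfolding PP_def e by simp
  qed
qed

lemma Phi_lower: "1 - (\<Sum>j<k. PP s j N) \<le> Phi s k N"
proof -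
  have sub: "L b N \<subseteq> {u \<in> L b N. k \<le> occ w (s @ u)} \<union> (\<Union>j<k. {u \<in> L b N. occ w (s @ u) = j})"
    by auto
  have "b ^ N \<le> card ({u \<in> L b N. k \<le> occ w (s @ u)} \<union> (\<Union>j<k. {u \<in> L b N. occ w (s @ u) = j}))"
    using card_mono[OF _ sub] cardL by auto
  also have "\<dots> \<le> card {u \<in> L b N. k \<le> occ w (s @ u)} + card (\<Union>j<k. {u \<in> L b N. occ w (s @ u) = j})"
    by (rule card_Un_le)
  also have "card (\<Union>j<k. {u \<in> L b N. occ w (s @ u) = j}) \<le> (\<Sum>j<k. card {u \<in> L b N. occ w (s @ u) = j})"
    by (rule card_UN_le) auto
  finally have "real b ^ N \<le> real (card {u \<in> L b N. k \<le> occ w (s @ u)}) + (\<Sum>j<k. real (card {u \<in> L b N. occ w (s @ u) = j}))"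
    by (simp flip: of_nat_sum of_nat_add of_nat_power)
  hence "real b ^ N * r ^ N \<le> (real (card {u \<in> L b N. k \<le> occ w (s @ u)}) + (\<Sum>j<k. real (card {u \<in> L b N. occ w (s @ u) = j}))) * r ^ N"
    using r_pos by (intro mult_right_mono) auto
  moreover have "(real (card {u \<in> L b N. k \<le> occ w (s @ u)}) + (\<Sum>j<k. real (card {u \<in> L b N. occ w (s @ u) = j}))) * r ^ N
     = Phi s k N + (\<Sum>j<k. PP s j N)"
    unfolding Phi_def PP_def by (simp add: distrib_right sum_distrib_right)
  ultimately show ?thesis using br[of N] by linarith
qed

lemma main_sums:
  assumes "occ w s < k"
  shows "PP s k sums real b ^ p"
proof -
  have low: "(\<lambda>N. 1 - (\<Sum>j<k. PP s j N)) \<longlonglongrightarrow> 1 - (\<Sum>j<k. 0)"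
    by (intro tendsto_intros PP_lim)
  have "Phi s k \<longlonglongrightarrow> 1"
  proof (rule tendsto_sandwich[of "\<lambda>N. 1 - (\<Sum>j<k. PP s j N)" _ _ "\<lambda>_. 1"])
    show "\<forall>\<^sub>F N in sequentially. 1 - (\<Sum>j<k. PP s j N) \<le> Phi s k N"
      by (intro always_eventually allI Phi_lower)
    show "\<forall>\<^sub>F N in sequentially. Phi s k N \<le> 1"
      by (intro always_eventually allI Phi_le1)
    show "(\<lambda>N. 1 - (\<Sum>j<k. PP s j N)) \<longlonglongrightarrow> 1" using low by simp
    show "(\<lambda>N. 1::real) \<longlonglongrightarrow> 1" by simp
  qed
  moreover have "Phi s k \<longlonglongrightarrow> suminf (hh s k)"
  proof -
    have "(\<lambda>n. \<Sum>i<n. hh s k i) \<longlonglongrightarrow> suminf (hh s k)"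
      using hh_summable[OF assms] summable_LIMSEQ by blast
    hence "(\<lambda>n. \<Sum>i<Suc n. hh s k i) \<longlonglongrightarrow> suminf (hh s k)" by (rule LIMSEQ_Suc)
    moreover have "Phi s k = (\<lambda>n. \<Sum>i<Suc n. hh s k i)"
      by (intro ext) (simp only: FIRST[OF assms] lessThan_Suc_atMost)
    ultimately show ?thesis by simp
  qed
  ultimately have "suminf (hh s k) = 1" using LIMSEQ_unique by blast
  then show ?thesis using PP_sums[OF assms] by simp
qed

end

lemma has_sum_by_length:
  fixes A :: "'a list set" and q T :: real
  assumes fin: "\<And>m. finite {u \<in> A. length u = m}" and q: "q \<ge> 0"
    and sm: "(\<lambda>m. real (card {u \<in> A. length u = m}) * q ^ m) sums T"
  shows "((\<lambda>u. q ^ length u) has_sum T) A"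
proof -
  define B where "B m = {u \<in> A. length u = m}" for m
  define c where "c m = real (card (B m)) * q ^ m" for m
  have c_nonneg: "c m \<ge> 0" for m unfolding c_def using q by simp
  have sumB: "(\<Sum>u\<in>B m. q ^ length u) = c m" for m
  proof -
    have "(\<Sum>u\<in>B m. q ^ length u) = (\<Sum>u\<in>B m. q ^ m)" by (intro sum.cong) (auto simp: B_def)
    then show ?thesis unfolding c_def by simp
  qed
  have csum: "c sums T" using sm unfolding c_def B_def .
  have bound: "sum (\<lambda>u. q ^ length u) F \<le> T" if F: "F \<subseteq> A" "finite F" for F
  proof -
    define M where "M = Max (insert 0 (length ` F))"
    have FU: "F \<subseteq> (\<Union>m\<in>{..M}. B m)"
    proof
      fix u assume u: "u \<in> F"
      have "length u \<le> M" unfolding M_def using F u by (intro Max_ge) auto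
      then show "u \<in> (\<Union>m\<in>{..M}. B m)" using u F unfolding B_def by auto
    qed
    have finB: "finite (B m)" for m unfolding B_def using fin .
    have "sum (\<lambda>u. q ^ length u) F \<le> sum (\<lambda>u. q ^ length u) (\<Union>m\<in>{..M}. B m)"
      using FU finB q by (intro sum_mono2) auto
    also have "\<dots> = (\<Sum>m\<in>{..M}. sum (\<lambda>u. q ^ length u) (B m))"
      by (rule sum.UNION_disjoint) (use fin in \<open>auto simp: B_def\<close>)
    also have "\<dots> = (\<Sum>m\<in>{..M}. c m)" using sumB by simp
    also have "\<dots> \<le> suminf c"
      by (rule sum_le_suminf) (use csum sums_summable c_nonneg in auto)
    also have "suminf c = T" using csum sums_unique by metis
    finally show ?thesis .
  qed
  have "(\<lambda>u. q ^ length u) summable_on A"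
    by (rule nonneg_bdd_above_summable_on) (use q bound in \<open>auto simp: bdd_above_def\<close>)
  then obtain T' where T': "((\<lambda>u. q ^ length u) has_sum T') A" using summable_on_def by blast
  define h where "h u = (length u, u)" for u :: "'a list"
  have injh: "inj_on h A" unfolding h_def inj_on_def by auto
  have hA: "h ` A = Sigma UNIV B" unfolding h_def B_def by auto
  have "((\<lambda>(m, u). q ^ length u) has_sum T') (h ` A)"
    using T' unfolding has_sum_reindex[OF injh] by (simp add: h_def comp_def)
  hence "((\<lambda>(m, u). q ^ length u) has_sum T') (Sigma UNIV B)" using hA by simp
  hence "(c has_sum T') UNIV"
  proof (rule has_sum_Sigma')
    fix m :: nat
    have "finite (B m)" unfolding B_def using fin .
    then show "((\<lambda>y. case (m, y) of (m, u) \<Rightarrow> q ^ length u) has_sum c m) (B m)"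
      using has_sum_finite[of "B m" "\<lambda>u. q ^ length u"] sumB[of m] by simp
  qed
  moreover have "(c has_sum T) UNIV" using sums_nonneg_imp_has_sum[OF csum c_nonneg] .
  ultimately have "T' = T" using has_sum_unique by blast
  then show ?thesis using T' by simp
qed

theorem theorem3:
  fixes b :: nat and w s :: "nat list"
  assumes "b \<ge> 2" and "w \<in> strings b" and "length w \<ge> 1" and "s \<in> strings b"
  shows "(\<forall>k::nat. k \<ge> 1 + kstar b w s \<longrightarrow>
           ((\<lambda>X. (1 / real b) ^ length X) has_sum
              (real b ^ length w * (1 / real b) ^ length s))
             {X \<in> strings b. occ w X = k \<and> (\<exists>u. X = s @ u)})
       \<and> (\<forall>k::nat. k \<ge> 1 \<longrightarrow>
           (\<lambda>l. real (Nw b w k l) * (1 / real b) ^ l) sums (real b ^ length w)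
           \<and> Zw b w k (1 / real b) = real b ^ length w
           \<and> ((\<lambda>X. (1 / real b) ^ length X) has_sum real b ^ length w)
               {X \<in> strings b. occ w X = k})"
proof -
  interpret occctx b w using assms by unfold_locales
  have lem: "((\<lambda>X. (1 / real b) ^ length X) has_sum (real b ^ length w * (1 / real b) ^ length s'))
             {X \<in> strings b. occ w X = k \<and> (\<exists>u. X = s' @ u)}"
    if s': "s' \<in> strings b" and k: "occ w s' < k" for s' k
  proof -
    define A where "A = {u \<in> strings b. occ w (s' @ u) = k}"
    have fib: "{u \<in> A. length u = m} = {u \<in> L b m. occ w (s' @ u) = k}" for m
      unfolding A_def L_def strings_def by auto
    have "((\<lambda>u. r ^ length u) has_sum real b ^ p) A"
    proof (rule has_sum_by_length)
      show "finite {u \<in> A. length u = m}" for m unfolding fib by simp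
      show "r \<ge> 0" using r_pos by simp
      show "(\<lambda>m. real (card {u \<in> A. length u = m}) * r ^ m) sums real b ^ p"
        unfolding fib using main_sums[OF k] unfolding PP_def .
    qed
    hence "((\<lambda>u. r ^ length s' * r ^ length u) has_sum (r ^ length s' * real b ^ p)) A"
      by (rule has_sum_cmult_right)
    hence "(((\<lambda>X. r ^ length X) \<circ> (\<lambda>u. s' @ u)) has_sum (r ^ length s' * real b ^ p)) A"
      by (simp add: comp_def power_add)
    hence "((\<lambda>X. r ^ length X) has_sum (r ^ length s' * real b ^ p)) ((\<lambda>u. s' @ u) ` A)"
      by (subst has_sum_reindex) (auto simp: inj_on_def)
    moreover have "(\<lambda>u. s' @ u) ` A = {X \<in> strings b. occ w X = k \<and> (\<exists>u. X = s' @ u)}"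
      using s' unfolding A_def strings_def by (auto simp: subset_iff)
    ultimately show ?thesis unfolding r_def by (simp add: mult.commute)
  qed
  have part1: "\<forall>k::nat. k \<ge> 1 + kstar b w s \<longrightarrow>
           ((\<lambda>X. (1 / real b) ^ length X) has_sum
              (real b ^ length w * (1 / real b) ^ length s))
             {X \<in> strings b. occ w X = k \<and> (\<exists>u. X = s @ u)}"
  proof (intro allI impI)
    fix k :: nat assume k: "k \<ge> 1 + kstar b w s"
    define z where "z = replicate (p - 1) (0::nat)"
    have zS: "z \<in> strings b" unfolding z_def strings_def using b2 by auto
    have eqM: "{occ w (s @ z) | z. z \<in> strings b \<and> length z = length w - 1} = (\<lambda>z. occ w (s @ z)) ` L b (p - 1)"
      unfolding L_def strings_def by auto
    have zL: "z \<in> L b (p - 1)" using zS unfolding z_def L_def strings_def by simp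
    have "occ w (s @ z) \<le> kstar b w s"
      unfolding kstar_def eqM by (rule Max_ge[OF finite_imageI[OF finL] imageI[OF zL]])
    moreover have "occ w s \<le> occ w (s @ z)" by (rule occ_mono)
    ultimately have "occ w s < k" using k by simp
    then show "((\<lambda>X. (1 / real b) ^ length X) has_sum
              (real b ^ length w * (1 / real b) ^ length s))
             {X \<in> strings b. occ w X = k \<and> (\<exists>u. X = s @ u)}"
      using lem[OF assms(4)] by blast
  qed
  have part2: "\<forall>k::nat. k \<ge> 1 \<longrightarrow>
           (\<lambda>l. real (Nw b w k l) * (1 / real b) ^ l) sums (real b ^ length w)
           \<and> Zw b w k (1 / real b) = real b ^ length w
           \<and> ((\<lambda>X. (1 / real b) ^ length X) has_sum real b ^ length w)
               {X \<in> strings b. occ w X = k}"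
  proof (intro allI impI)
    fix k :: nat assume k: "k \<ge> 1"
    hence k0: "occ w [] < k" by simp
    have NwPP: "real (Nw b w k l) * (1 / real b) ^ l = PP [] k l" for l
    proof -
      have "{X \<in> strings b. length X = l \<and> occ w X = k} = {u \<in> L b l. occ w ([] @ u) = k}"
        unfolding L_def strings_def by auto
      then show ?thesis unfolding Nw_def PP_def r_def by simp
    qed
    have S1: "(\<lambda>l. real (Nw b w k l) * (1 / real b) ^ l) sums (real b ^ length w)"
      unfolding NwPP using main_sums[OF k0] by simp
    moreover have "Zw b w k (1 / real b) = real b ^ length w"
      unfolding Zw_def using S1 sums_unique by metis
    moreover have "((\<lambda>X. (1 / real b) ^ length X) has_sum real b ^ length w) {X \<in> strings b. occ w X = k}"
    proof -
      have "[] \<in> strings b" unfolding strings_def by simp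
      from lem[OF this k0] show ?thesis by simp
    qed
    ultimately show "(\<lambda>l. real (Nw b w k l) * (1 / real b) ^ l) sums (real b ^ length w)
           \<and> Zw b w k (1 / real b) = real b ^ length w
           \<and> ((\<lambda>X. (1 / real b) ^ length X) has_sum real b ^ length w)
               {X \<in> strings b. occ w X = k}" by blast
  qed
  show ?thesis using part1 part2 by blast
qed

end
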